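(* Let $L=\sum_{k=1}^m P_{n_k}$ be a linear forest and $n$ a positive integer. If $L\in\operatorname{obs}(P_n)$, then: (1) $m_1\le 1$; (2) $n_k\in\{1,2,4,6\}$ for all $k\in\{1,\dots,m\}$; (3) if $n_k\in\{4,6\}$ for some $k$, then $m_1=1$.
   Context: All graphs are finite, simple and loopless. $P_n$ denotes the path on $n$ vertices ($P_1=K_1$, $P_2=K_2$). A linear forest is a disjoint union of paths; $\sum_{k=1}^m P_{n_k}$ denotes the linear forest whose $k$-th component is the path on $n_k$ vertices, and $m_i$ denotes the number of indices $k$ with $n_k=i$. A full-homomorphism $\varphi\colon G\to H$ is a map $V(G)\to V(H)$ such that for all $x,y\in V(G)$, $xy\in E(G)$ if and only if $\varphi(x)\varphi(y)\in E(H)$. A full $H$-colouring of $G$ is a full-homomorphism $G\to H$. A minimal $H$-obstruction is a graph $G$ that admits no full $H$-colouring while every proper induced subgraph of $G$ admits one; $\operatorname{obs}(H)$ denotes the set of minimal $H$-obstructions (up to isomorphism). *)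

theory Defs
  imports Main
begin

text \<open>A graph is a pair (V, E) of a vertex set and an adjacency relation
  (symmetric, irreflexive for all graphs considered here).\<close>
type_synonym 'a graph = "'a set \<times> ('a \<Rightarrow> 'a \<Rightarrow> bool)"

definition verts :: "'a graph \<Rightarrow> 'a set" where "verts G = fst G"
definition adj :: "'a graph \<Rightarrow> 'a \<Rightarrow> 'a \<Rightarrow> bool" where "adj G = snd G"

definition full_hom :: "'a graph \<Rightarrow> 'b graph \<Rightarrow> ('a \<Rightarrow> 'b) \<Rightarrow> bool" where
  "full_hom G H f \<longleftrightarrow> (\<forall>x\<in>verts G. f x \<in> verts H) \<and>
     (\<forall>x\<in>verts G. \<forall>y\<in>verts G. adj G x y \<longleftrightarrow> adj H (f x) (f y))"

definition full_colourable :: "'a graph \<Rightarrow> 'b graph \<Rightarrow> bool" where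
  "full_colourable G H \<longleftrightarrow> (\<exists>f. full_hom G H f)"

definition induced :: "'a graph \<Rightarrow> 'a set \<Rightarrow> 'a graph" where
  "induced G S = (S \<inter> verts G, \<lambda>x y. x \<in> S \<and> y \<in> S \<and> adj G x y)"

definition min_obs :: "'a graph \<Rightarrow> 'b graph \<Rightarrow> bool" where
  "min_obs G H \<longleftrightarrow> \<not> full_colourable G H \<and>
     (\<forall>S. S \<subset> verts G \<longrightarrow> full_colourable (induced G S) H)"

definition path_graph :: "nat \<Rightarrow> nat graph" where
  "path_graph n = ({..<n}, \<lambda>i j. i < n \<and> j < n \<and> (i + 1 = j \<or> j + 1 = i))"

text \<open>The linear forest P_{n_1} + ... + P_{n_m} given by the list [n_1,...,n_m]
  (0-indexed): vertex (k,i) is the i-th vertex of the k-th path.\<close>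
definition linear_forest :: "nat list \<Rightarrow> (nat \<times> nat) graph" where
  "linear_forest ns = ({(k, i). k < length ns \<and> i < ns ! k},
     \<lambda>(k, i) (l, j). k < length ns \<and> l = k \<and> i < ns ! k \<and> j < ns ! k \<and> (i + 1 = j \<or> j + 1 = i))"

definition mult :: "nat list \<Rightarrow> nat \<Rightarrow> nat" where
  "mult ns i = card {k. k < length ns \<and> ns ! k = i}"

end

theory Submission
  imports Defs
begin

definition cw :: "nat \<Rightarrow> nat" where
  "cw x = (if x \<le> 1 then 0 else if x = 3 then 3 else x + 1)"

definition Wt :: "nat list \<Rightarrow> nat" where
  "Wt ns = sum_list (map cw ns) + (if 1 \<in> set ns then 2 else 0)"

lemma lf_verts: "verts (linear_forest ns) = {(k, i). k < length ns \<and> i < ns ! k}"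
  by (simp add: linear_forest_def verts_def)

lemma lf_adj: "adj (linear_forest ns) (k,i) (l,j) \<longleftrightarrow> k < length ns \<and> l = k \<and> i < ns ! k \<and> j < ns ! k \<and> (i + 1 = j \<or> j + 1 = i)"
  by (simp add: linear_forest_def adj_def)

lemma pg_verts: "verts (path_graph n) = {..<n}"
  by (simp add: path_graph_def verts_def)

lemma pg_adj: "adj (path_graph n) i j \<longleftrightarrow> i < n \<and> j < n \<and> (i + 1 = j \<or> j + 1 = i)"
  by (simp add: path_graph_def adj_def)

lemma ind_verts: "verts (induced G S) = S \<inter> verts G"
  by (simp add: induced_def verts_def)

lemma ind_adj: "adj (induced G S) x y \<longleftrightarrow> x \<in> S \<and> y \<in> S \<and> adj G x y"
  by (simp add: induced_def adj_def)

lemma full_hom_comp: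
  assumes "full_hom G H f"
    and "\<forall>x\<in>verts G'. \<phi> x \<in> verts G"
    and "\<forall>x\<in>verts G'. \<forall>y\<in>verts G'. adj G' x y \<longleftrightarrow> adj G (\<phi> x) (\<phi> y)"
  shows "full_hom G' H (f \<circ> \<phi>)"
  using assms unfolding full_hom_def by auto

lemma shift_step:
  assumes f: "full_hom (linear_forest ns) (path_graph m) f"
    and sm: "m = 0 \<or> s + m \<le> n"
    and sn: "s \<le> n + 1"
    and qb: "\<forall>i<x. q i + 2 \<le> s"
    and qa: "\<forall>i<x. \<forall>j<x. (q i + 1 = q j \<or> q j + 1 = q i) \<longleftrightarrow> (i + 1 = j \<or> j + 1 = i)"
  shows "full_hom (linear_forest (x#ns)) (path_graph n) (\<lambda>(k,i). if k = 0 then q i else f (k - 1, i) + s)"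
  unfolding full_hom_def
proof (intro conjI ballI)
  fix u assume u: "u \<in> verts (linear_forest (x#ns))"
  obtain k i where [simp]: "u = (k,i)" by (cases u)
  show "(\<lambda>(k,i). if k = 0 then q i else f (k - 1, i) + s) u \<in> verts (path_graph n)"
  proof (cases k)
    case 0 thus ?thesis using u qb sn by (fastforce simp: lf_verts pg_verts)
  next
    case (Suc k')
    with u have "(k',i) \<in> verts (linear_forest ns)" by (auto simp: lf_verts)
    with f have "f (k',i) < m" by (auto simp: full_hom_def pg_verts)
    thus ?thesis using Suc sm by (auto simp: pg_verts)
  qed
next
  fix u v assume u: "u \<in> verts (linear_forest (x#ns))" and v: "v \<in> verts (linear_forest (x#ns))"
  obtain k i where [simp]: "u = (k,i)" by (cases u)
  obtain l j where [simp]: "v = (l,j)" by (cases v)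
  have fm: "f (k',i') < m" if "(k',i') \<in> verts (linear_forest ns)" for k' i'
    using f that by (auto simp: full_hom_def pg_verts)
  have fa: "adj (linear_forest ns) (k',i') (l',j') \<longleftrightarrow> (f (k',i') + 1 = f (l',j') \<or> f (l',j') + 1 = f (k',i'))"
    if "(k',i') \<in> verts (linear_forest ns)" "(l',j') \<in> verts (linear_forest ns)" for k' i' l' j'
    using f that fm[OF that(1)] fm[OF that(2)] unfolding full_hom_def pg_adj by blast
  show "adj (linear_forest (x#ns)) u v \<longleftrightarrow> adj (path_graph n) ((\<lambda>(k,i). if k = 0 then q i else f (k - 1, i) + s) u) ((\<lambda>(k,i). if k = 0 then q i else f (k - 1, i) + s) v)"
  proof (cases k)
    case 0
    then have i: "i < x" using u by (auto simp: lf_verts)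
    show ?thesis
    proof (cases l)
      case 0
      then have j: "j < x" using v by (auto simp: lf_verts)
      have "q i < n" "q j < n" using qb sn i j by force+
      thus ?thesis using 0 \<open>k = 0\<close> i j qa by (auto simp: lf_adj pg_adj)
    next
      case (Suc l')
      have "q i < n" using qb sn i by force
      moreover have "q i + 2 \<le> s" using qb i by blast
      ultimately show ?thesis using Suc \<open>k = 0\<close> by (auto simp: lf_adj pg_adj)
    qed
  next
    case (Suc k')
    then have ku: "(k',i) \<in> verts (linear_forest ns)" using u by (auto simp: lf_verts)
    show ?thesis
    proof (cases l)
      case 0
      then have j: "j < x" using v by (auto simp: lf_verts)
      have "q j < n" using qb sn j by force
      moreover have "q j + 2 \<le> s" using qb j by blast
      ultimately show ?thesis using Suc \<open>l = 0\<close> by (auto simp: lf_adj pg_adj)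
    next
      case (Suc l')
      then have lv: "(l',j) \<in> verts (linear_forest ns)" using v by (auto simp: lf_verts)
      have "m \<noteq> 0" using fm[OF ku] by auto
      hence smn: "s + m \<le> n" using sm by auto
      have "adj (linear_forest (x#ns)) u v \<longleftrightarrow> adj (linear_forest ns) (k',i) (l',j)"
        using \<open>k = Suc k'\<close> Suc by (simp add: lf_adj)
      also have "\<dots> \<longleftrightarrow> (f (k',i) + 1 = f (l',j) \<or> f (l',j) + 1 = f (k',i))" by (rule fa[OF ku lv])
      also have "\<dots> \<longleftrightarrow> adj (path_graph n) (f (k',i) + s) (f (l',j) + s)"
        using fm[OF ku] fm[OF lv] smn by (auto simp: pg_adj)
      finally show ?thesis using \<open>k = Suc k'\<close> Suc by simp
    qed
  qed
qed

lemma twin_step: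
  assumes f: "full_hom (linear_forest ns) (path_graph n) f"
    and k1: "k1 < length ns" "ns ! k1 = 1"
  shows "full_hom (linear_forest (1#ns)) (path_graph n) (\<lambda>(k,i). if k = 0 then f (k1, 0) else f (k - 1, i))"
  unfolding full_hom_def
proof (intro conjI ballI)
  have k1v: "(k1,0) \<in> verts (linear_forest ns)" using k1 by (simp add: lf_verts)
  fix u assume u: "u \<in> verts (linear_forest (1#ns))"
  obtain k i where [simp]: "u = (k,i)" by (cases u)
  show "(\<lambda>(k,i). if k = 0 then f (k1, 0) else f (k - 1, i)) u \<in> verts (path_graph n)"
  proof (cases k)
    case 0 thus ?thesis using f k1v by (auto simp: full_hom_def)
  next
    case (Suc k')
    with u have "(k',i) \<in> verts (linear_forest ns)" by (auto simp: lf_verts)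
    with f show ?thesis using Suc by (auto simp: full_hom_def)
  qed
next
  have k1v: "(k1,0) \<in> verts (linear_forest ns)" using k1 by (simp add: lf_verts)
  fix u v assume u: "u \<in> verts (linear_forest (1#ns))" and v: "v \<in> verts (linear_forest (1#ns))"
  obtain k i where [simp]: "u = (k,i)" by (cases u)
  obtain l j where [simp]: "v = (l,j)" by (cases v)
  have fa: "adj (linear_forest ns) a b \<longleftrightarrow> adj (path_graph n) (f a) (f b)"
    if "a \<in> verts (linear_forest ns)" "b \<in> verts (linear_forest ns)" for a b
    using f that unfolding full_hom_def by blast
  have nk1: "\<not> adj (linear_forest ns) (k1,0) b" for b
    using k1 by (cases b) (auto simp: lf_adj)
  show "adj (linear_forest (1#ns)) u v \<longleftrightarrow> adj (path_graph n) ((\<lambda>(k,i). if k = 0 then f (k1, 0) else f (k - 1, i)) u) ((\<lambda>(k,i). if k = 0 then f (k1, 0) else f (k - 1, i)) v)"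
  proof (cases k)
    case 0
    show ?thesis
    proof (cases l)
      case 0
      thus ?thesis using \<open>k=0\<close> by (auto simp: lf_adj pg_adj)
    next
      case (Suc l')
      then have lv: "(l',j) \<in> verts (linear_forest ns)" using v by (auto simp: lf_verts)
      show ?thesis using fa[OF k1v lv] nk1[of "(l',j)"] Suc \<open>k=0\<close> by (auto simp: lf_adj)
    qed
  next
    case (Suc k')
    then have ku: "(k',i) \<in> verts (linear_forest ns)" using u by (auto simp: lf_verts)
    show ?thesis
    proof (cases l)
      case 0
      have "\<not> adj (path_graph n) (f (k',i)) (f (k1,0))"
        using fa[OF ku k1v] nk1[of "(k',i)"] fa[OF k1v ku]
        by (auto simp: pg_adj)
      thus ?thesis using Suc \<open>l=0\<close> by (auto simp: lf_adj)
    next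
      case (Suc l')
      then have lv: "(l',j) \<in> verts (linear_forest ns)" using v by (auto simp: lf_verts)
      show ?thesis using fa[OF ku lv] Suc \<open>k = Suc k'\<close> by (simp add: lf_adj)
    qed
  qed
qed

lemma construct: "Wt ns \<le> n + 1 \<Longrightarrow> \<exists>f. full_hom (linear_forest ns) (path_graph n) f"
proof (induction ns arbitrary: n)
  case Nil
  show ?case by (auto simp: full_hom_def lf_verts)
next
  case (Cons x ns)
  show ?case
  proof (cases "x = 1")
    case x1: True
    show ?thesis
    proof (cases "1 \<in> set ns")
      case True
      then have "Wt ns \<le> n + 1" using Cons.prems x1 by (simp add: Wt_def cw_def)
      then obtain f where f: "full_hom (linear_forest ns) (path_graph n) f" using Cons.IH by blast
      from True obtain k1 where "k1 < length ns" "ns ! k1 = 1" by (auto simp: in_set_conv_nth)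
      from twin_step[OF f this] show ?thesis using x1 by blast
    next
      case False
      then have "Wt ns \<le> (n - 2) + 1" "2 \<le> n + 1" using Cons.prems x1 by (simp_all add: Wt_def cw_def)
      then obtain f where f: "full_hom (linear_forest ns) (path_graph (n-2)) f" using Cons.IH by blast
      have "full_hom (linear_forest (x#ns)) (path_graph n) (\<lambda>(k,i). if k = 0 then (\<lambda>_. 0) i else f (k - 1, i) + 2)"
        by (rule shift_step[OF f]) (use \<open>2 \<le> n + 1\<close> x1 in auto)
      thus ?thesis by blast
    qed
  next
    case False
    have W: "Wt (x#ns) = cw x + Wt ns" using False by (simp add: Wt_def)
    then have "Wt ns \<le> (n - cw x) + 1" "cw x \<le> n + 1" using Cons.prems by simp_all
    then obtain f where f: "full_hom (linear_forest ns) (path_graph (n - cw x)) f" using Cons.IH by blast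
    define q where "q = (\<lambda>i::nat. if x = 3 then (if i = 1 then 1 else 0) else i)"
    have "full_hom (linear_forest (x#ns)) (path_graph n) (\<lambda>(k,i). if k = 0 then q i else f (k - 1, i) + cw x)"
    proof (rule shift_step[OF f])
      show "n - cw x = 0 \<or> cw x + (n - cw x) \<le> n" by auto
      show "cw x \<le> n + 1" by fact
      show "\<forall>i<x. q i + 2 \<le> cw x" using False by (auto simp: q_def cw_def)
      show "\<forall>i<x. \<forall>j<x. (q i + 1 = q j \<or> q j + 1 = q i) \<longleftrightarrow> (i + 1 = j \<or> j + 1 = i)"
      proof (cases "x = 3")
        case True
        show ?thesis
        proof (intro allI impI)
          fix i j :: nat assume "i < x" "j < x"
          then have "i \<in> {0,1,2}" "j \<in> {0,1,2}" using True by auto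
          thus "(q i + 1 = q j \<or> q j + 1 = q i) \<longleftrightarrow> (i + 1 = j \<or> j + 1 = i)"
            using True by (auto simp: q_def)
        qed
      qed (auto simp: q_def)
    qed
    thus ?thesis by blast
  qed
qed

lemma packing:
  fixes A :: "'i \<Rightarrow> nat set"
  assumes I: "finite I"
    and sub: "\<forall>i\<in>I. A i \<subseteq> {..<n}"
    and disj: "\<forall>i\<in>I. \<forall>j\<in>I. i \<noteq> j \<longrightarrow> A i \<inter> A j = {}"
    and nadj: "\<forall>i\<in>I. \<forall>j\<in>I. i \<noteq> j \<longrightarrow> (\<forall>a\<in>A i. \<forall>b\<in>A j. a + 1 \<noteq> b)"
  shows "(\<Sum>i\<in>I. if A i = {} then 0 else card (A i) + 1) \<le> n + 1"
proof -
  define E where "E i = (if A i = {} then {} else insert (Max (A i) + 1) (A i))" for i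
  have fin: "finite (A i)" if "i \<in> I" for i using sub that by (meson finite_lessThan finite_subset)
  have cE: "card (E i) = (if A i = {} then 0 else card (A i) + 1)" if "i \<in> I" for i
  proof (cases "A i = {}")
    case True thus ?thesis by (simp add: E_def)
  next
    case False
    have "Max (A i) + 1 \<notin> A i" using Max_ge[OF fin[OF that]] by fastforce
    thus ?thesis using False fin[OF that] by (simp add: E_def)
  qed
  have Esub: "E i \<subseteq> {..<Suc n}" if "i \<in> I" for i
  proof (cases "A i = {}")
    case True thus ?thesis by (simp add: E_def)
  next
    case False
    have "Max (A i) \<in> A i" using Max_in[OF fin[OF that] False] .
    hence m: "Max (A i) < n" using sub that by auto
    have s: "A i \<subseteq> {..<n}" using sub that by blast
    show ?thesis
    proof
      fix x assume "x \<in> E i"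
      hence "x = Max (A i) + 1 \<or> x \<in> A i" using False by (simp add: E_def)
      thus "x \<in> {..<Suc n}"
      proof
        assume "x = Max (A i) + 1" thus ?thesis using m by simp
      next
        assume "x \<in> A i" hence "x < n" using s by blast
        thus ?thesis by simp
      qed
    qed
  qed
  have Edisj: "\<forall>i\<in>I. \<forall>j\<in>I. i \<noteq> j \<longrightarrow> E i \<inter> E j = {}"
  proof (intro ballI impI)
    fix i j assume i: "i \<in> I" and j: "j \<in> I" and ij: "i \<noteq> j"
    show "E i \<inter> E j = {}"
    proof (cases "A i = {} \<or> A j = {}")
      case True thus ?thesis by (cases "A i = {}") (simp_all add: E_def)
    next
      case False
      hence nei: "A i \<noteq> {}" and nej: "A j \<noteq> {}" by blast+
      have mi: "Max (A i) \<in> A i" by (rule Max_in[OF fin[OF i] nei])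
      have mj: "Max (A j) \<in> A j" by (rule Max_in[OF fin[OF j] nej])
      have d: "A i \<inter> A j = {}" by (rule disj[rule_format, OF i j ij])
      have n1: "\<forall>a\<in>A i. \<forall>b\<in>A j. a + 1 \<noteq> b" using nadj i j ij by (meson)
      have n2: "\<forall>a\<in>A j. \<forall>b\<in>A i. a + 1 \<noteq> b" using nadj j i ij[symmetric] by (meson)
      have x1: "Max (A i) + 1 \<notin> A j" using bspec[OF n1 mi] by metis
      have x2: "Max (A j) + 1 \<notin> A i" using bspec[OF n2 mj] by metis
      have x3: "Max (A i) \<noteq> Max (A j)" using d mi mj by (metis IntI empty_iff)
      have Ei: "E i = insert (Max (A i) + 1) (A i)" using nei by (simp add: E_def)
      have Ej: "E j = insert (Max (A j) + 1) (A j)" using nej by (simp add: E_def)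
      show ?thesis unfolding Ei Ej using x1 x2 x3 d by auto
    qed
  qed
  have finE: "\<forall>i\<in>I. finite (E i)" using Esub by (meson finite_lessThan finite_subset)
  have "(\<Sum>i\<in>I. if A i = {} then 0 else card (A i) + 1) = (\<Sum>i\<in>I. card (E i))"
    by (rule sum.cong[OF refl]) (simp add: cE)
  also have "\<dots> = card (\<Union>i\<in>I. E i)" using card_UN_disjoint[OF I finE Edisj] by simp
  also have "\<dots> \<le> card {..<Suc n}" proof (rule card_mono)
    show "(\<Union>i\<in>I. E i) \<subseteq> {..<Suc n}" using Esub by blast
  qed simp
  finally show ?thesis by simp
qed


lemma seq_inj:
  fixes a :: "nat \<Rightarrow> int"
  assumes N: "4 \<le> N"
    and h: "\<forall>i<N. \<forall>j<N. \<bar>a i - a j\<bar> = 1 \<longleftrightarrow> (i + 1 = j \<or> j + 1 = i)"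
  shows "inj_on a {..<N}"
proof -
  have h': "\<bar>a i - a j\<bar> = 1 \<longleftrightarrow> (i + 1 = j \<or> j + 1 = i)" if "i < N" "j < N" for i j
    using h that by blast
  have step: "a (i+2) - a (i+1) = a (i+1) - a i" if iN: "i + 2 < N" for i
  proof (rule ccontr)
    assume ne: "a (i+2) - a (i+1) \<noteq> a (i+1) - a i"
    have d1: "\<bar>a (i+2) - a (i+1)\<bar> = 1" using h'[of "i+2" "i+1"] iN by simp
    have d2: "\<bar>a (i+1) - a i\<bar> = 1" using h'[of "i+1" i] iN by simp
    have eq: "a (i+2) = a i" using d1 d2 ne by arith
    show False
    proof (cases i)
      case 0
      have "\<bar>a 3 - a 2\<bar> = 1" using h'[of 3 2] N by simp
      moreover have "\<bar>a 3 - a 0\<bar> \<noteq> 1" using h'[of 3 0] N by simp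
      moreover have "a 2 = a 0" using eq 0 by (simp add: numeral_2_eq_2)
      ultimately show False by simp
    next
      case (Suc p)
      have "\<bar>a p - a (p+1)\<bar> = 1" using h'[of p "p+1"] iN Suc by simp
      moreover have "\<bar>a p - a (p+3)\<bar> \<noteq> 1" using h'[of p "p+3"] iN Suc by simp
      ultimately show False using eq Suc by (simp add: numeral_3_eq_3)
    qed
  qed
  define d where "d = a 1 - a 0"
  have dd: "\<bar>d\<bar> = 1" using h'[of 1 0] N by (simp add: d_def)
  have diff: "i + 1 < N \<longrightarrow> a (i+1) - a i = d" for i
  proof (induction i)
    case 0 thus ?case by (simp add: d_def)
  next
    case (Suc i)
    show ?case using step[of i] Suc by (simp add: numeral_2_eq_2)
  qed
  have lin: "i < N \<longrightarrow> a i = a 0 + int i * d" for i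
  proof (induction i)
    case 0 thus ?case by simp
  next
    case (Suc i)
    show ?case using diff[of i] Suc by (simp add: algebra_simps)
  qed
  show ?thesis
  proof (rule inj_onI)
    fix i j assume "i \<in> {..<N}" "j \<in> {..<N}" "a i = a j"
    then have "int i * d = int j * d" using lin[of i] lin[of j] by simp
    thus "i = j" using dd by auto
  qed
qed

lemma sum_cw: "sum_list (map cw ns) = (\<Sum>k<length ns. cw (ns ! k))"
  by (induction ns) (simp_all del: sum.lessThan_Suc add: sum.lessThan_Suc_shift)

lemma analysis:
  assumes f: "full_hom (linear_forest ns) (path_graph n) f"
  shows "Wt ns \<le> n + 1"
proof -
  let ?L = "linear_forest ns"
  let ?V = "verts ?L"
  have fv: "f u < n" if "u \<in> ?V" for u using f that by (auto simp: full_hom_def pg_verts)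
  have fa: "adj ?L u w \<longleftrightarrow> (f u + 1 = f w \<or> f w + 1 = f u)" if "u \<in> ?V" "w \<in> ?V" for u w
    using f that fv[OF that(1)] fv[OF that(2)] unfolding full_hom_def pg_adj by blast
  have nadjfst: "\<not> (f u + 1 = f w \<or> f w + 1 = f u)" if "u \<in> ?V" "w \<in> ?V" "fst u \<noteq> fst w" for u w
  proof -
    have "\<not> adj ?L u w" using that(3) by (cases u, cases w) (auto simp: lf_adj)
    thus ?thesis using fa[OF that(1,2)] by simp
  qed
  have neq: "f u \<noteq> f w" if "u \<in> ?V" "w \<in> ?V" "fst u \<noteq> fst w" "u' \<in> ?V" "adj ?L u u'" for u w u'
  proof
    assume e: "f u = f w"
    have "fst u' = fst u" using that(5) by (cases u, cases u') (auto simp: lf_adj)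
    hence "\<not> adj ?L w u'" using that(3) by (cases w, cases u') (auto simp: lf_adj)
    hence "\<not> (f w + 1 = f u' \<or> f u' + 1 = f w)" using fa[OF that(2,4)] by simp
    moreover have "f u + 1 = f u' \<or> f u' + 1 = f u" using fa[OF that(1,4)] that(5) by simp
    ultimately show False using e by simp
  qed
  have nb: "\<exists>u'\<in>?V. adj ?L (k,i) u'" if "k < length ns" "2 \<le> ns ! k" "i < ns ! k" for k i
  proof (cases "i + 1 < ns ! k")
    case True
    thus ?thesis using that by (intro bexI[of _ "(k, i+1)"]) (auto simp: lf_adj lf_verts)
  next
    case False
    thus ?thesis using that by (intro bexI[of _ "(k, i - 1)"]) (auto simp: lf_adj lf_verts)
  qed
  define A where "A k = (if k < length ns then (if 2 \<le> ns ! k then (\<lambda>i. f (k,i)) ` {..<ns ! k} else {})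
       else (\<lambda>k. f (k,0)) ` {k. k < length ns \<and> ns ! k = 1})" for k
  define I where "I = {..<Suc (length ns)}"
  have memA: "\<exists>u\<in>?V. a = f u \<and> (if k < length ns then fst u = k \<and> 2 \<le> ns ! k \<and> (\<exists>u'\<in>?V. adj ?L u u') else ns ! fst u = 1)"
    if kI: "k \<in> I" and aA: "a \<in> A k" for k a
  proof (cases "k < length ns")
    case True
    then have k2: "2 \<le> ns ! k" and "a \<in> (\<lambda>i. f (k,i)) ` {..<ns ! k}" using aA by (auto simp: A_def split: if_splits)
    then obtain i where i: "i < ns ! k" "a = f (k,i)" by auto
    have "(k,i) \<in> ?V" using True i by (simp add: lf_verts)
    thus ?thesis using True k2 i nb[OF True k2 i(1)] by (intro bexI[of _ "(k,i)"]) auto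
  next
    case False
    then obtain k' where k': "k' < length ns" "ns ! k' = 1" "a = f (k',0)" using aA by (auto simp: A_def)
    have "(k',0) \<in> ?V" using k' by (simp add: lf_verts)
    thus ?thesis using False k' by (intro bexI[of _ "(k',0)"]) auto
  qed
  have sep: "a + 1 \<noteq> b \<and> a \<noteq> b" if H: "k \<in> I" "k' \<in> I" "k \<noteq> k'" "a \<in> A k" "b \<in> A k'" for k k' a b
  proof -
    obtain u where u: "u \<in> ?V" "a = f u" and pu: "if k < length ns then fst u = k \<and> 2 \<le> ns ! k \<and> (\<exists>u'\<in>?V. adj ?L u u') else ns ! fst u = 1"
      using memA[OF H(1,4)] by blast
    obtain w where w: "w \<in> ?V" "b = f w" and pw: "if k' < length ns then fst w = k' \<and> 2 \<le> ns ! k' \<and> (\<exists>w'\<in>?V. adj ?L w w') else ns ! fst w = 1"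
      using memA[OF H(2,5)] by blast
    have kk: "k < length ns \<or> k' < length ns" using H(1,2,3) by (auto simp: I_def)
    have fs: "fst u \<noteq> fst w"
    proof (cases "k < length ns"; cases "k' < length ns")
      assume "k < length ns" "k' < length ns" thus ?thesis using pu pw H(3) by auto
    next
      assume "k < length ns" "\<not> k' < length ns" thus ?thesis using pu pw by auto
    next
      assume "\<not> k < length ns" "k' < length ns" thus ?thesis using pu pw by auto
    next
      assume "\<not> k < length ns" "\<not> k' < length ns" thus ?thesis using kk by auto
    qed
    have "a + 1 \<noteq> b" using nadjfst[OF u(1) w(1) fs] u w by simp
    moreover have "a \<noteq> b"
    proof (cases "k < length ns")
      case True
      then obtain u' where "u' \<in> ?V" "adj ?L u u'" using pu by auto
      thus ?thesis using neq[OF u(1) w(1) fs] u w by simp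
    next
      case False
      then have "k' < length ns" using kk by simp
      then obtain w' where w': "w' \<in> ?V" "adj ?L w w'" using pw by auto
      have "fst w \<noteq> fst u" using fs by simp
      from neq[OF w(1) u(1) this w'] show ?thesis using u w by simp
    qed
    ultimately show ?thesis by simp
  qed
  have sub: "\<forall>k\<in>I. A k \<subseteq> {..<n}"
  proof (intro ballI subsetI)
    fix k a assume "k \<in> I" "a \<in> A k"
    then obtain u where "u \<in> ?V" "a = f u" using memA[of k a] by auto
    thus "a \<in> {..<n}" using fv by simp
  qed
  have disj: "\<forall>i\<in>I. \<forall>j\<in>I. i \<noteq> j \<longrightarrow> A i \<inter> A j = {}"
  proof (intro ballI impI)
    fix i j assume "i \<in> I" "j \<in> I" "i \<noteq> j"
    then have "\<And>a b. a \<in> A i \<Longrightarrow> b \<in> A j \<Longrightarrow> a \<noteq> b" using sep[of i j] by simp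
    thus "A i \<inter> A j = {}" by (metis disjoint_iff)
  qed
  have nadj: "\<forall>i\<in>I. \<forall>j\<in>I. i \<noteq> j \<longrightarrow> (\<forall>a\<in>A i. \<forall>b\<in>A j. a + 1 \<noteq> b)"
  proof (intro ballI impI)
    fix i j a b assume "i \<in> I" "j \<in> I" "i \<noteq> j" "a \<in> A i" "b \<in> A j"
    thus "a + 1 \<noteq> b" using sep[of i j a b] by simp
  qed
  have P: "(\<Sum>k\<in>I. if A k = {} then 0 else card (A k) + 1) \<le> n + 1"
    by (rule packing[OF _ sub disj nadj]) (simp add: I_def)
  define g where "g k = (if A k = {} then 0 else card (A k) + 1)" for k
  have fA: "finite (A k)" for k by (simp add: A_def)
  have lb: "cw (ns ! k) \<le> g k" if k: "k < length ns" for k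
  proof (cases "2 \<le> ns ! k")
    case False thus ?thesis by (simp add: cw_def)
  next
    case True
    have Ak: "A k = (\<lambda>i. f (k,i)) ` {..<ns ! k}" using k True by (simp add: A_def)
    have v0: "(k,0) \<in> ?V" and v1: "(k,1) \<in> ?V" using k True by (auto simp: lf_verts)
    have "f (k,0) \<in> A k" using Ak True by auto
    hence ne: "A k \<noteq> {}" by blast
    show ?thesis
    proof (cases "4 \<le> ns ! k")
      case True
      have "inj_on (\<lambda>i. int (f (k,i))) {..<ns ! k}"
      proof (rule seq_inj[OF True], intro allI impI)
        fix i j assume ij: "i < ns ! k" "j < ns ! k"
        have vi: "(k,i) \<in> ?V" and vj: "(k,j) \<in> ?V" using ij k by (auto simp: lf_verts)
        have "(i + 1 = j \<or> j + 1 = i) \<longleftrightarrow> adj ?L (k,i) (k,j)" using ij k by (simp add: lf_adj)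
        also have "\<dots> \<longleftrightarrow> (f (k,i) + 1 = f (k,j) \<or> f (k,j) + 1 = f (k,i))" by (rule fa[OF vi vj])
        also have "\<dots> \<longleftrightarrow> \<bar>int (f (k,i)) - int (f (k,j))\<bar> = 1" by arith
        finally show "\<bar>int (f (k,i)) - int (f (k,j))\<bar> = 1 \<longleftrightarrow> (i + 1 = j \<or> j + 1 = i)" by simp
      qed
      hence "inj_on (\<lambda>i. f (k,i)) {..<ns ! k}" by (auto simp: inj_on_def)
      hence "card (A k) = ns ! k" using Ak by (simp add: card_image)
      thus ?thesis using ne True by (simp add: g_def cw_def)
    next
      case False
      have "adj ?L (k,0) (k,1)" using k \<open>2 \<le> ns ! k\<close> by (simp add: lf_adj)
      hence "f (k,0) \<noteq> f (k,1)" using fa[OF v0 v1] by auto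
      moreover have "f (k,1) \<in> A k" using Ak \<open>2 \<le> ns ! k\<close> by auto
      ultimately have "card {f (k,0), f (k,1)} \<le> card (A k)"
        using \<open>f (k,0) \<in> A k\<close> fA by (intro card_mono) auto
      hence "2 \<le> card (A k)" using \<open>f (k,0) \<noteq> f (k,1)\<close> by simp
      thus ?thesis using ne False by (simp add: g_def cw_def)
    qed
  qed
  have lbl: "(if 1 \<in> set ns then 2 else 0) \<le> g (length ns)"
  proof (cases "1 \<in> set ns")
    case True
    then obtain k1 where "k1 < length ns" "ns ! k1 = 1" by (auto simp: in_set_conv_nth)
    hence "f (k1,0) \<in> A (length ns)" by (auto simp: A_def)
    hence "A (length ns) \<noteq> {}" by blast
    hence "card (A (length ns)) \<noteq> 0" using fA[of "length ns"] by simp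
    thus ?thesis using \<open>A (length ns) \<noteq> {}\<close> by (simp add: g_def)
  qed simp
  have "Wt ns = (\<Sum>k<length ns. cw (ns ! k)) + (if 1 \<in> set ns then 2 else 0)"
    by (simp add: Wt_def sum_cw)
  also have "\<dots> \<le> (\<Sum>k<length ns. g k) + g (length ns)"
    using lb lbl by (intro add_mono sum_mono) auto
  also have "\<dots> = (\<Sum>k\<in>I. g k)" by (simp add: I_def)
  also have "\<dots> \<le> n + 1" using P by (simp add: g_def)
  finally show ?thesis .
qed

lemma key:
  assumes mo: "min_obs (linear_forest ns) (path_graph n)"
    and k0: "k0 < length ns" and d: "d < ns ! k0"
    and W: "Wt ns \<le> Wt (ns[k0 := d] @ [ns ! k0 - d - 1])"
  shows False
proof -
  let ?L = "linear_forest ns"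
  let ?S = "verts ?L - {(k0,d)}"
  have "\<not> full_colourable ?L (path_graph n)" using mo by (simp add: min_obs_def)
  hence W1: "\<not> Wt ns \<le> n + 1" using construct by (auto simp: full_colourable_def)
  have "(k0,d) \<in> verts ?L" using k0 d by (simp add: lf_verts)
  hence "?S \<subset> verts ?L" by blast
  hence "full_colourable (induced ?L ?S) (path_graph n)" using mo by (simp add: min_obs_def)
  then obtain f where f: "full_hom (induced ?L ?S) (path_graph n) f" by (auto simp: full_colourable_def)
  define ns' where "ns' = ns[k0 := d] @ [ns ! k0 - d - 1]"
  define \<phi> where "\<phi> = (\<lambda>(k::nat,i::nat). if k = length ns then (k0, i + d + 1) else (k,i))"
  have len: "length ns' = Suc (length ns)" by (simp add: ns'_def)
  have nth': "ns' ! k = (if k = length ns then ns ! k0 - d - 1 else if k = k0 then d else ns ! k)"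
    if "k < Suc (length ns)" for k
    using that k0 by (auto simp: ns'_def nth_append)
  have V': "(k,i) \<in> verts (linear_forest ns') \<longleftrightarrow> k < Suc (length ns) \<and> i < ns' ! k" for k i
    using len by (simp add: lf_verts)
  have "full_hom (linear_forest ns') (path_graph n) (f \<circ> \<phi>)"
  proof (rule full_hom_comp[OF f])
    show "\<forall>x\<in>verts (linear_forest ns'). \<phi> x \<in> verts (induced ?L ?S)"
    proof
      fix x assume x: "x \<in> verts (linear_forest ns')"
      obtain k i where [simp]: "x = (k,i)" by (cases x)
      have ki: "k < Suc (length ns)" "i < ns' ! k" using x V' by auto
      show "\<phi> x \<in> verts (induced ?L ?S)"
        using ki nth'[OF ki(1)] k0 d by (auto simp: \<phi>_def ind_verts lf_verts split: if_splits)
    qed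
    show "\<forall>x\<in>verts (linear_forest ns'). \<forall>y\<in>verts (linear_forest ns'). adj (linear_forest ns') x y \<longleftrightarrow> adj (induced ?L ?S) (\<phi> x) (\<phi> y)"
    proof (intro ballI)
      fix x y assume x: "x \<in> verts (linear_forest ns')" and y: "y \<in> verts (linear_forest ns')"
      obtain k i where [simp]: "x = (k,i)" by (cases x)
      obtain l j where [simp]: "y = (l,j)" by (cases y)
      have ki: "k < Suc (length ns)" "i < ns' ! k" using x V' by auto
      have lj: "l < Suc (length ns)" "j < ns' ! l" using y V' by auto
      have A1: "adj (linear_forest ns') x y \<longleftrightarrow> l = k \<and> i < ns' ! k \<and> j < ns' ! k \<and> (i + 1 = j \<or> j + 1 = i)"
        using ki len by (simp add: lf_adj)
      show "adj (linear_forest ns') x y \<longleftrightarrow> adj (induced ?L ?S) (\<phi> x) (\<phi> y)"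
        unfolding A1 using ki lj nth'[OF ki(1)] nth'[OF lj(1)] k0 d
        by (auto simp: \<phi>_def ind_adj lf_adj lf_verts split: if_splits)
    qed
  qed
  hence "Wt ns' \<le> n + 1" by (rule analysis)
  thus False using W W1 by (simp add: ns'_def)
qed

lemma sum_upd: "k < length ns \<Longrightarrow> sum_list (map cw (ns[k := x])) + cw (ns ! k) = sum_list (map cw ns) + cw x"
  by (induction ns arbitrary: k) (auto split: nat.splits)

lemma mem1: "1 \<in> set ns \<Longrightarrow> ns ! k \<noteq> 1 \<Longrightarrow> 1 \<in> set (ns[k := d] @ r)"
proof -
  assume "1 \<in> set ns" "ns ! k \<noteq> 1"
  then obtain j where j: "j < length ns" "ns ! j = 1" by (auto simp: in_set_conv_nth)
  hence "j \<noteq> k" using \<open>ns ! k \<noteq> 1\<close> by auto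
  hence "ns[k := d] ! j = 1" using j by simp
  hence "1 \<in> set (ns[k := d])" using j by (metis length_list_update nth_mem)
  thus ?thesis by simp
qed

theorem lemma2p4:
  fixes ns :: "nat list" and n :: nat
  assumes "\<forall>k < length ns. ns ! k \<ge> 1"
    and "n \<ge> 1"
    and "min_obs (linear_forest ns) (path_graph n)"
  shows "mult ns 1 \<le> 1
    \<and> (\<forall>k < length ns. ns ! k \<in> {1, 2, 4, 6})
    \<and> ((\<exists>k < length ns. ns ! k \<in> {4, 6}) \<longrightarrow> mult ns 1 = 1)"
proof -
  note pos = assms(1) and mo = assms(3)
  let ?M = "{k. k < length ns \<and> ns ! k = 1}"
  have finM: "finite ?M" by simp
  have P1: "mult ns 1 \<le> 1"
  proof (rule ccontr)
    assume "\<not> mult ns 1 \<le> 1"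
    hence "\<not> card ?M \<le> Suc 0" by (simp add: mult_def)
    then obtain k0 k1 where kk: "k0 \<in> ?M" "k1 \<in> ?M" "k0 \<noteq> k1"
      using card_le_Suc0_iff_eq[OF finM] by blast
    have k1: "k1 < length ns" "ns ! k1 = 1" using kk by auto
    have k0: "k0 < length ns" "ns ! k0 = 1" using kk by auto
    have s: "sum_list (map cw (ns[k1 := 0])) = sum_list (map cw ns)"
      using sum_upd[OF k1(1), of 0] k1 by (simp add: cw_def)
    have "(ns[k1 := 0] @ [0]) ! k0 = 1" using k0 kk(3) by (simp add: nth_append)
    hence "1 \<in> set (ns[k1 := 0] @ [0])" using k0 by (metis length_append length_list_update nth_mem trans_less_add1)
    hence "Wt ns \<le> Wt (ns[k1 := 0] @ [ns ! k1 - 0 - 1])" using s k1 by (simp add: Wt_def cw_def)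
    thus False using key[OF mo k1(1)] k1 by simp
  qed
  have P2: "\<forall>k < length ns. ns ! k \<in> {1, 2, 4, 6}"
  proof (intro allI impI, rule ccontr)
    fix k assume k: "k < length ns" and nk: "ns ! k \<notin> {1, 2, 4, 6}"
    have ge: "3 \<le> ns ! k" using pos k nk by force
    have s: "sum_list (map cw (ns[k := 2])) + cw (ns ! k) = sum_list (map cw ns) + 3"
      using sum_upd[OF k, of 2] by (simp add: cw_def)
    have c: "cw (ns ! k) \<le> 3 + cw (ns ! k - 3)" using ge nk unfolding cw_def by (auto split: if_splits)
    have m: "1 \<in> set ns \<Longrightarrow> 1 \<in> set (ns[k := 2] @ [ns ! k - 2 - 1])"
      by (rule mem1) (use nk in auto)
    have "Wt ns \<le> Wt (ns[k := 2] @ [ns ! k - 2 - 1])"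
      using s c m by (auto simp: Wt_def)
    thus False using key[OF mo k, of 2] ge by simp
  qed
  have P3: "(\<exists>k < length ns. ns ! k \<in> {4, 6}) \<longrightarrow> mult ns 1 = 1"
  proof (intro impI, rule ccontr)
    assume "\<exists>k < length ns. ns ! k \<in> {4, 6}" and "mult ns 1 \<noteq> 1"
    then obtain k where k: "k < length ns" "ns ! k \<in> {4, 6}" by blast
    have "mult ns 1 = 0" using P1 \<open>mult ns 1 \<noteq> 1\<close> by linarith
    hence "card ?M = 0" unfolding mult_def .
    hence "?M = {}" using finM by (metis card_eq_0_iff)
    hence no1: "1 \<notin> set ns" by (auto simp: in_set_conv_nth)
    have s: "sum_list (map cw (ns[k := 1])) + cw (ns ! k) = sum_list (map cw ns)"
      using sum_upd[OF k(1), of 1] by (simp add: cw_def)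
    have c: "cw (ns ! k) = 2 + cw (ns ! k - 1 - 1)" using k(2) by (auto simp: cw_def)
    have "1 \<in> set (ns[k := 1])" using k(1) by (rule set_update_memI)
    hence "Wt ns \<le> Wt (ns[k := 1] @ [ns ! k - 1 - 1])"
      using s c no1 by (simp add: Wt_def)
    thus False using key[OF mo k(1), of 1] k(2) by auto
  qed
  show ?thesis using P1 P2 P3 by blast
qed

end
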